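(* Let $n$ be a nonnegative integer and let $x,y$ be complex numbers such that no denominator below vanishes. Then \[ \sum_{k=0}^{n}(-1)^k\binom{n}{k} \frac{\binom{\frac{x}{2}+k}{k}\binom{x-\frac{1}{2}+k}{k}\binom{y+k}{k}} {\binom{\frac{x-1}{2}+k}{k}\binom{x-\frac{1}{2}+n+k}{k}\binom{x-y-\frac{1}{2}+k}{k}} \frac{1+2x+4k}{1+2x+2n+2k}H_{2k}(x) =\frac{1}{2}\frac{\binom{x-\frac{1}{2}+n}{n}\binom{\frac{x-3}{2}-y+n}{n}} {\binom{\frac{x-1}{2}+n}{n}\binom{x-y-\frac{1}{2}+n}{n}} \big\{H_n(\tfrac{x-1}{2})-H_n(\tfrac{x-3}{2}-y)\big\}. \]
   Context: For complex $z$ and a nonnegative integer $k$, $\binom{z}{k}=\frac{z(z-1)\cdots(z-k+1)}{k!}$ (with $\binom{z}{0}=1$). For complex $x$ and nonnegative integer $m$, $H_0(x)=0$ and $H_m(x)=\sum_{j=1}^m\frac{1}{x+j}$ for $m\ge1$. The parameters are assumed to be such that all denominators are nonzero. *)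

theory Defs
  imports "HOL-Analysis.Analysis"
begin

definition H :: "nat \<Rightarrow> complex \<Rightarrow> complex" where
  "H m x = (\<Sum>j=1..m. 1 / (x + of_nat j))"

end

theory Submission
  imports Defs
begin


definition uu :: "complex \<Rightarrow> complex \<Rightarrow> complex \<Rightarrow> nat \<Rightarrow> nat \<Rightarrow> complex" where
  "uu a b c m k = pochhammer (- of_nat m) k * pochhammer b k * pochhammer a k * pochhammer c k
     * (a + 2 * of_nat k) * pochhammer (a + of_nat m + of_nat k + 1) (m - k)
     / (fact k * pochhammer (a - b + 1) k * pochhammer (a - c + 1) k)"

definition vv :: "complex \<Rightarrow> complex \<Rightarrow> complex \<Rightarrow> nat \<Rightarrow> nat \<Rightarrow> complex" where
  "vv a b c m k = (case k of 0 \<Rightarrow> 0 | Suc j \<Rightarrow>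
     pochhammer (- of_nat m) j * pochhammer b (Suc j) * pochhammer a (Suc j) * pochhammer c (Suc j)
     * pochhammer (a + of_nat m + of_nat j + 2) (Suc m - j)
     / (fact j * pochhammer (a - b + 1) j * pochhammer (a - c + 1) j))"

lemma poch_cong: "z = w \<Longrightarrow> pochhammer z n = pochhammer w n" by simp

lemma I1_mid:
  fixes a b c :: complex and j d :: nat
  assumes m: "m = Suc (j + d)"
  assumes nb: "pochhammer (a-b+1) (Suc j) \<noteq> 0" and nc: "pochhammer (a-c+1) (Suc j) \<noteq> 0"
  shows "(1+a-b+ of_nat m)*(1+a-c+ of_nat m) * uu a b c (Suc m) (Suc j)
       - (1+a-b-c+ of_nat m)*(a+2* of_nat m+1)*(a+2* of_nat m+2) * uu a b c m (Suc j)
       = vv a b c m (Suc (Suc j)) - vv a b c m (Suc j)"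
proof -
  define J :: complex where "J = of_nat j"
  define D :: complex where "D = of_nat d"
  define Y where "Y = pochhammer (a + 2*J + D + 4) d"
  define P where "P = pochhammer (- of_nat m :: complex) j"
  define B where "B = pochhammer b j"
  define A where "A = pochhammer a j"
  define C where "C = pochhammer c j"
  define DB where "DB = pochhammer (a-b+1) j"
  define DC where "DC = pochhammer (a-c+1) j"
  define Fj :: complex where "Fj = fact j"
  have mm: "(of_nat m :: complex) = J + D + 1" using m by (simp add: J_def D_def)
  have nb': "DB \<noteq> 0" "a-b+1+J \<noteq> 0" using nb by (auto simp: DB_def J_def pochhammer_Suc)
  have nc': "DC \<noteq> 0" "a-c+1+J \<noteq> 0" using nc by (auto simp: DC_def J_def pochhammer_Suc)
  have F0: "Fj \<noteq> 0" "J + 1 \<noteq> 0" unfolding Fj_def J_def by simp_all (metis of_nat_Suc of_nat_eq_0_iff nat.distinct(1) add.commute)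
  have e1: "pochhammer (- of_nat (Suc m) :: complex) (Suc j) = - (J + D + 2) * P"
    unfolding pochhammer_rec P_def by (simp add: mm algebra_simps)
  have e2: "pochhammer (- of_nat m :: complex) (Suc j) = - (D + 1) * P"
    unfolding pochhammer_Suc P_def by (simp add: mm J_def algebra_simps)
  have t1: "pochhammer (a + of_nat (Suc m) + of_nat (Suc j) + 1) (Suc m - Suc j) = Y * (a + 2*J + 2*D + 4)"
  proof -
    have "Suc m - Suc j = Suc d" using m by simp
    moreover have "a + of_nat (Suc m) + of_nat (Suc j) + 1 = a + 2*J + D + 4" by (simp add: mm J_def algebra_simps)
    ultimately have "pochhammer (a + of_nat (Suc m) + of_nat (Suc j) + 1) (Suc m - Suc j) = pochhammer (a + 2*J + D + 4) (Suc d)" by (simp only:)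
    then show ?thesis by (simp add: pochhammer_Suc Y_def D_def algebra_simps)
  qed
  have t2: "(a+2* of_nat m+1) * pochhammer (a + of_nat m + of_nat (Suc j) + 1) (m - Suc j) = (a + 2*J + D + 3) * Y"
  proof -
    have "m - Suc j = d" using m by simp
    moreover have "a + of_nat m + of_nat (Suc j) + 1 = a + 2*J + D + 3" by (simp add: mm J_def algebra_simps)
    moreover have "pochhammer (a + 2*J + D + 3) d * (a + 2*J + D + 3 + D) = (a + 2*J + D + 3) * Y"
      using pochhammer_Suc[of "a + 2*J + D + 3" d] pochhammer_rec[of "a + 2*J + D + 3" d]
      by (simp add: Y_def D_def algebra_simps)
    ultimately have "pochhammer (a + of_nat m + of_nat (Suc j) + 1) (m - Suc j) = pochhammer (a + 2*J + D + 3) d" by (simp only:)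
    moreover have "a+2* of_nat m+1 = a + 2*J + D + 3 + D" by (simp add: mm algebra_simps)
    ultimately show ?thesis by (metis (no_types, lifting) \<open>pochhammer (a + 2*J + D + 3) d * (a + 2*J + D + 3 + D) = (a + 2*J + D + 3) * Y\<close> mult.commute)
  qed
  have t3: "pochhammer (a + of_nat m + of_nat (Suc j) + 2) (Suc m - Suc j) = Y * (a + 2*J + 2*D + 4)"
  proof -
    have "Suc m - Suc j = Suc d" using m by simp
    moreover have "a + of_nat m + of_nat (Suc j) + 2 = a + 2*J + D + 4" by (simp add: mm J_def algebra_simps)
    ultimately have "pochhammer (a + of_nat m + of_nat (Suc j) + 2) (Suc m - Suc j) = pochhammer (a + 2*J + D + 4) (Suc d)" by (simp only:)
    then show ?thesis by (simp add: pochhammer_Suc Y_def D_def algebra_simps)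
  qed
  have t4: "pochhammer (a + of_nat m + of_nat j + 2) (Suc m - j) = (a + 2*J + D + 3) * Y * (a + 2*J + 2*D + 4)"
  proof -
    have "Suc m - j = Suc (Suc d)" using m by simp
    moreover have "a + of_nat m + of_nat j + 2 = a + 2*J + D + 3" by (simp add: mm J_def algebra_simps)
    ultimately have "pochhammer (a + of_nat m + of_nat j + 2) (Suc m - j) = pochhammer (a + 2*J + D + 3) (Suc (Suc d))" by (simp only:)
    also have "\<dots> = (a + 2*J + D + 3) * pochhammer (a + 2*J + D + 4) (Suc d)"
      by (subst pochhammer_rec) (simp add: algebra_simps)
    finally show ?thesis by (simp add: pochhammer_Suc Y_def D_def algebra_simps)
  qed
  have u1: "uu a b c (Suc m) (Suc j) = - (J+D+2)*P*(B*(b+J))*(A*(a+J))*(C*(c+J))*(a+2*J+2)*(Y*(a + 2*J + 2*D + 4))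
        / (Fj*(J+1)*(DB*(a-b+1+J))*(DC*(a-c+1+J)))"
    unfolding uu_def unfolding e1 t1 unfolding pochhammer_Suc fact_Suc
    unfolding of_nat_Suc A_def[symmetric] B_def[symmetric] C_def[symmetric] DB_def[symmetric] DC_def[symmetric] Fj_def[symmetric] J_def[symmetric]
    by ((simp only: times_divide_eq_right)?, intro arg_cong2[where f="(/)"]; algebra)
  have u0: "(a + 2* of_nat m + 1) * uu a b c m (Suc j) = - (D+1)*P*(B*(b+J))*(A*(a+J))*(C*(c+J))*(a+2*J+2)*((a + 2*J + D + 3) * Y)
        / (Fj*(J+1)*(DB*(a-b+1+J))*(DC*(a-c+1+J)))"
  proof -
    have "(a + 2* of_nat m + 1) * uu a b c m (Suc j) = - (D+1)*P*(B*(b+J))*(A*(a+J))*(C*(c+J))*(a+2*J+2)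
       *((a + 2* of_nat m + 1) * pochhammer (a + of_nat m + of_nat (Suc j) + 1) (m - Suc j))
        / (Fj*(J+1)*(DB*(a-b+1+J))*(DC*(a-c+1+J)))"
      unfolding uu_def unfolding e2 unfolding pochhammer_Suc[of b] pochhammer_Suc[of a] pochhammer_Suc[of c]
         pochhammer_Suc[of "a-b+1"] pochhammer_Suc[of "a-c+1"] fact_Suc
      unfolding of_nat_Suc A_def[symmetric] B_def[symmetric] C_def[symmetric] DB_def[symmetric] DC_def[symmetric] Fj_def[symmetric] J_def[symmetric]
    by ((simp only: times_divide_eq_right)?, intro arg_cong2[where f="(/)"]; algebra)
    then show ?thesis by (simp only: t2)
  qed
  have v2: "vv a b c m (Suc (Suc j)) = - (D+1)*P*(B*(b+J)*(b+J+1))*(A*(a+J)*(a+J+1))*(C*(c+J)*(c+J+1))*(Y*(a + 2*J + 2*D + 4))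
        / (Fj*(J+1)*(DB*(a-b+1+J))*(DC*(a-c+1+J)))"
    unfolding vv_def nat.case unfolding e2 t3 unfolding pochhammer_Suc fact_Suc
    unfolding of_nat_Suc A_def[symmetric] B_def[symmetric] C_def[symmetric] DB_def[symmetric] DC_def[symmetric] Fj_def[symmetric] J_def[symmetric]
    by ((simp only: times_divide_eq_right)?, intro arg_cong2[where f="(/)"]; algebra)
  have v1: "vv a b c m (Suc j) = P*(B*(b+J))*(A*(a+J))*(C*(c+J))*((a + 2*J + D + 3) * Y * (a + 2*J + 2*D + 4))
        / (Fj*DB*DC)"
    unfolding vv_def nat.case unfolding t4 unfolding pochhammer_Suc
    unfolding of_nat_Suc A_def[symmetric] B_def[symmetric] C_def[symmetric] P_def[symmetric] DB_def[symmetric] DC_def[symmetric] Fj_def[symmetric] J_def[symmetric]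
    by (rule refl)
  have alg: "(1+a-b+(J+D+1))*(1+a-c+(J+D+1)) * (- (J+D+2)*P*(B*(b+J))*(A*(a+J))*(C*(c+J))*(a+2*J+2)*(Y*(a + 2*J + 2*D + 4))
        / (Fj*(J+1)*(DB*(a-b+1+J))*(DC*(a-c+1+J))))
      - (1+a-b-c+(J+D+1))*(a+2*(J+D+1)+2) * (- (D+1)*P*(B*(b+J))*(A*(a+J))*(C*(c+J))*(a+2*J+2)*((a + 2*J + D + 3) * Y)
        / (Fj*(J+1)*(DB*(a-b+1+J))*(DC*(a-c+1+J))))
      = - (D+1)*P*(B*(b+J)*(b+J+1))*(A*(a+J)*(a+J+1))*(C*(c+J)*(c+J+1))*(Y*(a + 2*J + 2*D + 4))
        / (Fj*(J+1)*(DB*(a-b+1+J))*(DC*(a-c+1+J)))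
       - P*(B*(b+J))*(A*(a+J))*(C*(c+J))*((a + 2*J + D + 3) * Y * (a + 2*J + 2*D + 4))
        / (Fj*DB*DC)"
  proof -
    define Q where "Q = Fj*(J+1)*(DB*(a-b+1+J))*(DC*(a-c+1+J))"
    have Q0: "Q \<noteq> 0" unfolding Q_def using nb' nc' F0 by simp
    define W where "W = (J+1)*(a-b+1+J)*(a-c+1+J)"
    have W0: "W \<noteq> 0" unfolding W_def using nb' nc' F0 by simp
    have QW: "Q = (Fj*DB*DC) * W" unfolding Q_def W_def by (simp only: mult_ac)
    have r: "P*(B*(b+J))*(A*(a+J))*(C*(c+J))*((a + 2*J + D + 3) * Y * (a + 2*J + 2*D + 4)) / (Fj*DB*DC)
       = P*(B*(b+J))*(A*(a+J))*(C*(c+J))*((a + 2*J + D + 3) * Y * (a + 2*J + 2*D + 4)) * ((J+1)*(a-b+1+J)*(a-c+1+J)) / Q"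
      unfolding QW W_def[symmetric] using W0 by simp
    have e: "x*(N1/Q) - y*(N2/Q) = N3/Q - N4/Q \<longleftrightarrow> x*N1 - y*N2 - N3 + N4 = 0" for x y N1 N2 N3 N4
    proof -
      have 1: "x*(N1/Q) - y*(N2/Q) = (x*N1 - y*N2)/Q" by (simp add: diff_divide_distrib)
      have 2: "N3/Q - N4/Q = (N3 - N4)/Q" by (simp add: diff_divide_distrib)
      have 3: "((x*N1 - y*N2)/Q = (N3 - N4)/Q) \<longleftrightarrow> x*N1 - y*N2 = N3 - N4" using Q0 by (simp add: frac_eq_eq)
      show ?thesis unfolding 1 2 3 by (simp add: algebra_simps)
    qed
    show ?thesis unfolding r Q_def[symmetric] e by algebra
  qed
  have "(1+a-b+ of_nat m)*(1+a-c+ of_nat m) * uu a b c (Suc m) (Suc j)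
       - (1+a-b-c+ of_nat m)*(a+2* of_nat m+2) * ((a+2* of_nat m+1) * uu a b c m (Suc j))
       = vv a b c m (Suc (Suc j)) - vv a b c m (Suc j)"
    unfolding u1 u0 v1 v2 unfolding mm by (rule alg)
  then show ?thesis by (simp add: mult_ac)
qed


definition qq :: "complex \<Rightarrow> complex \<Rightarrow> complex \<Rightarrow> nat \<Rightarrow> nat \<Rightarrow> complex" where
  "qq a b c m k = (case k of 0 \<Rightarrow> 0 | Suc j \<Rightarrow>
     pochhammer (- of_nat m) j * pochhammer b j * pochhammer a (Suc j) * pochhammer c (Suc j)
     * pochhammer (a + of_nat m + of_nat j + 2) (Suc m - j)
     / (fact j * pochhammer (a - b + 1) j * pochhammer (a - c + 1) j))"

lemma vv_qq: "vv a b c m (Suc j) = qq a b c m (Suc j) * (b + of_nat j)"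
  unfolding vv_def qq_def nat.case pochhammer_Suc[of b] by (simp add: mult_ac)

lemma uu_zero: "m < k \<Longrightarrow> uu a b c m k = 0"
  unfolding uu_def by (simp add: pochhammer_of_nat_eq_0_lemma)

lemma vv_zero: "Suc m < k \<Longrightarrow> vv a b c m k = 0"
  unfolding vv_def by (cases k) (simp_all add: pochhammer_of_nat_eq_0_lemma)

lemma qq_zero: "Suc m < k \<Longrightarrow> qq a b c m k = 0"
  unfolding qq_def by (cases k) (simp_all add: pochhammer_of_nat_eq_0_lemma)

lemma I1_zero:
  fixes a b c :: complex
  shows "(1+a-b+ of_nat m)*(1+a-c+ of_nat m) * uu a b c (Suc m) 0
       - (1+a-b-c+ of_nat m)*(a+2* of_nat m+1)*(a+2* of_nat m+2) * uu a b c m 0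
       = vv a b c m (Suc 0) - vv a b c m 0"
proof -
  define M :: complex where "M = of_nat m"
  define Y where "Y = pochhammer (a + M + 2) m"
  have p1: "pochhammer (a + of_nat (Suc m) + of_nat 0 + 1) (Suc m - 0) = Y * (a + 2*M + 2)"
  proof -
    have "pochhammer (a + of_nat (Suc m) + of_nat 0 + 1) (Suc m - 0) = pochhammer (a + M + 2) (Suc m)"
      by (rule arg_cong2[where f=pochhammer]) (simp_all add: M_def algebra_simps)
    then show ?thesis unfolding pochhammer_Suc Y_def by (simp add: M_def algebra_simps)
  qed
  have p2: "(a+2* of_nat m+1) * pochhammer (a + of_nat m + of_nat 0 + 1) (m - 0) = (a + M + 1) * Y"
  proof -
    have "pochhammer (a + of_nat m + of_nat 0 + 1) (m - 0) = pochhammer (a + M + 1) m"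
      by (rule arg_cong2[where f=pochhammer]) (simp_all add: M_def algebra_simps)
    moreover have "pochhammer (a + M + 1) m * (a + M + 1 + M) = (a + M + 1) * Y"
      using pochhammer_Suc[of "a + M + 1" m] pochhammer_rec[of "a + M + 1" m]
      by (simp add: Y_def M_def algebra_simps)
    ultimately show ?thesis by (simp add: M_def algebra_simps)
  qed
  have p3: "pochhammer (a + of_nat m + of_nat 0 + 2) (Suc m - 0) = Y * (a + 2*M + 2)"
  proof -
    have "pochhammer (a + of_nat m + of_nat 0 + 2) (Suc m - 0) = pochhammer (a + M + 2) (Suc m)"
      by (rule arg_cong2[where f=pochhammer]) (simp_all add: M_def algebra_simps)
    then show ?thesis unfolding pochhammer_Suc Y_def by (simp add: M_def algebra_simps)
  qed
  have u1: "uu a b c (Suc m) 0 = a * (Y * (a + 2*M + 2))"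
    unfolding uu_def unfolding p1 by simp
  have u0: "(a+2*M+1) * uu a b c m 0 = a * ((a + M + 1) * Y)"
  proof -
    have "(a+2*M+1) * uu a b c m 0 = a * ((a+2* of_nat m+1) * pochhammer (a + of_nat m + of_nat 0 + 1) (m - 0))"
      unfolding uu_def M_def by simp
    then show ?thesis unfolding p2 .
  qed
  have v1: "vv a b c m (Suc 0) = b * a * c * (Y * (a + 2*M + 2))"
    unfolding vv_def nat.case unfolding p3 by simp
  have "(1+a-b+ of_nat m)*(1+a-c+ of_nat m) * uu a b c (Suc m) 0
       - (1+a-b-c+ of_nat m)*(a+2* of_nat m+1)*(a+2* of_nat m+2) * uu a b c m 0
     = (1+a-b+M)*(1+a-c+M)*uu a b c (Suc m) 0 - (1+a-b-c+M)*(a+2*M+2)*((a+2*M+1)*uu a b c m 0)"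
    by (simp add: M_def mult_ac)
  also have "\<dots> = (1+a-b+ M)*(1+a-c+ M) * (a * (Y * (a + 2*M + 2)))
       - (1+a-b-c+ M)*(a+2* M+2) * (a * ((a + M + 1) * Y))" unfolding u1 u0 ..
  also have "\<dots> = b * a * c * (Y * (a + 2*M + 2)) - 0" by algebra
  also have "\<dots> = vv a b c m (Suc 0) - vv a b c m 0" unfolding v1 by (simp add: vv_def)
  finally show ?thesis .
qed

lemma cancel_aux:
  fixes u v w X F D1 D2 :: complex
  assumes "u \<noteq> 0" "v \<noteq> 0" "w \<noteq> 0" "F \<noteq> 0" "D1 \<noteq> 0" "D2 \<noteq> 0"
  shows "(u * v)*(- w * X / (w*F*(D1*u)*(D2 * v))) = - (X/(F*D1*D2))"
  using assms by (simp add: field_simps)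

lemma I1_top:
  fixes a b c :: complex
  assumes nb: "pochhammer (a-b+1) (Suc m) \<noteq> 0" and nc: "pochhammer (a-c+1) (Suc m) \<noteq> 0"
  shows "(1+a-b+ of_nat m)*(1+a-c+ of_nat m) * uu a b c (Suc m) (Suc m)
       - (1+a-b-c+ of_nat m)*(a+2* of_nat m+1)*(a+2* of_nat m+2) * uu a b c m (Suc m)
       = vv a b c m (Suc (Suc m)) - vv a b c m (Suc m)"
proof -
  define M :: complex where "M = of_nat m"
  define P where "P = pochhammer (- of_nat m :: complex) m"
  define BB where "BB = pochhammer b (Suc m)"
  define AA where "AA = pochhammer a (Suc m)"
  define CC where "CC = pochhammer c (Suc m)"
  define DB where "DB = pochhammer (a-b+1) m"
  define DC where "DC = pochhammer (a-c+1) m"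
  define Fm :: complex where "Fm = fact m"
  have nb': "DB \<noteq> 0" "a-b+1+M \<noteq> 0" using nb by (auto simp: DB_def M_def pochhammer_Suc)
  have nc': "DC \<noteq> 0" "a-c+1+M \<noteq> 0" using nc by (auto simp: DC_def M_def pochhammer_Suc)
  have F0: "Fm \<noteq> 0" "M + 1 \<noteq> 0" unfolding Fm_def M_def by simp_all (metis of_nat_Suc of_nat_eq_0_iff nat.distinct(1) add.commute)
  have e1: "pochhammer (- of_nat (Suc m) :: complex) (Suc m) = - (M + 1) * P"
    unfolding pochhammer_rec P_def by (simp add: M_def algebra_simps)
  have u1: "uu a b c (Suc m) (Suc m) = - (M + 1) * P * BB * AA * CC * (a + 2*M + 2) / ((M+1) * Fm * (DB * (a-b+1+M)) * (DC * (a-c+1+M)))"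
    unfolding uu_def unfolding e1 BB_def[symmetric] AA_def[symmetric] CC_def[symmetric]
    unfolding pochhammer_Suc[of "a-b+1"] pochhammer_Suc[of "a-c+1"] fact_Suc
    unfolding DB_def[symmetric] DC_def[symmetric] Fm_def[symmetric] M_def[symmetric] of_nat_Suc
    by (simp add: algebra_simps)
  have v1: "vv a b c m (Suc m) = P * BB * AA * CC * (a + 2*M + 2) / (Fm * DB * DC)"
    unfolding vv_def nat.case P_def[symmetric] BB_def[symmetric] AA_def[symmetric] CC_def[symmetric]
      DB_def[symmetric] DC_def[symmetric] Fm_def[symmetric]
    by (simp add: M_def algebra_simps)
  have "(1+a-b+ M)*(1+a-c+ M) * (- (M + 1) * P * BB * AA * CC * (a + 2*M + 2) / ((M+1) * Fm * (DB * (a-b+1+M)) * (DC * (a-c+1+M))))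
      = - (P * BB * AA * CC * (a + 2*M + 2) / (Fm * DB * DC))"
  proof -
    have "(1+a-b+ M)*(1+a-c+ M) = (a-b+1+M)*(a-c+1+M)" by algebra
    moreover have "- (M + 1) * P * BB * AA * CC * (a + 2*M + 2) = - (M+1) * (P * BB * AA * CC * (a + 2*M + 2))" by algebra
    ultimately show ?thesis using cancel_aux[OF nb'(2) nc'(2) F0(2) F0(1) nb'(1) nc'(1)] by simp
  qed
  then show ?thesis using u1 v1 by (simp add: uu_zero vv_zero M_def)
qed

lemma I1:
  fixes a b c :: complex
  assumes k: "k \<le> Suc m" and nb: "pochhammer (a-b+1) k \<noteq> 0" and nc: "pochhammer (a-c+1) k \<noteq> 0"
  shows "(1+a-b+ of_nat m)*(1+a-c+ of_nat m) * uu a b c (Suc m) k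
       - (1+a-b-c+ of_nat m)*(a+2* of_nat m+1)*(a+2* of_nat m+2) * uu a b c m k
       = vv a b c m (Suc k) - vv a b c m k"
proof (cases k)
  case 0 then show ?thesis using I1_zero by simp
next
  case (Suc j)
  show ?thesis
  proof (cases "k = Suc m")
    case True then show ?thesis using I1_top nb nc by simp
  next
    case False
    then obtain d where "m = Suc (j + d)" using k Suc by (metis add_Suc_right le_SucE less_imp_Suc_add not_less_eq_eq Suc_le_eq le_add1 le_imp_less_Suc)
    then show ?thesis using I1_mid[of m j d a b c] nb nc Suc by simp
  qed
qed



lemma I2_mid:
  fixes a b c :: complex and j d :: nat
  assumes m: "m = Suc (j + d)"
  assumes nb: "pochhammer (a-b+1) (Suc j) \<noteq> 0" and nc: "pochhammer (a-c+1) (Suc j) \<noteq> 0"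
  shows "vv a b c m (Suc j) / (a - b + of_nat (Suc j)) = - qq a b c m (Suc (Suc j))
       - (1+a-c+ of_nat m) * uu a b c (Suc m) (Suc j)
       + (a+2* of_nat m+2) * ((a+2* of_nat m+1) * uu a b c m (Suc j))"
proof -
  define J :: complex where "J = of_nat j"
  define D :: complex where "D = of_nat d"
  define Y where "Y = pochhammer (a + 2*J + D + 4) d"
  define P where "P = pochhammer (- of_nat m :: complex) j"
  define B where "B = pochhammer b j"
  define A where "A = pochhammer a j"
  define C where "C = pochhammer c j"
  define DB where "DB = pochhammer (a-b+1) j"
  define DC where "DC = pochhammer (a-c+1) j"
  define Fj :: complex where "Fj = fact j"
  have mm: "(of_nat m :: complex) = J + D + 1" using m by (simp add: J_def D_def)
  have nb': "DB \<noteq> 0" "a-b+1+J \<noteq> 0" using nb by (auto simp: DB_def J_def pochhammer_Suc)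
  have nc': "DC \<noteq> 0" "a-c+1+J \<noteq> 0" using nc by (auto simp: DC_def J_def pochhammer_Suc)
  have F0: "Fj \<noteq> 0" "J + 1 \<noteq> 0" unfolding Fj_def J_def by simp_all (metis of_nat_Suc of_nat_eq_0_iff nat.distinct(1) add.commute)
  have e1: "pochhammer (- of_nat (Suc m) :: complex) (Suc j) = - (J + D + 2) * P"
    unfolding pochhammer_rec P_def by (simp add: mm algebra_simps)
  have e2: "pochhammer (- of_nat m :: complex) (Suc j) = - (D + 1) * P"
    unfolding pochhammer_Suc P_def by (simp add: mm J_def algebra_simps)
  have t1: "pochhammer (a + of_nat (Suc m) + of_nat (Suc j) + 1) (Suc m - Suc j) = Y * (a + 2*J + 2*D + 4)"
  proof -
    have "Suc m - Suc j = Suc d" using m by simp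
    moreover have "a + of_nat (Suc m) + of_nat (Suc j) + 1 = a + 2*J + D + 4" by (simp add: mm J_def algebra_simps)
    ultimately have "pochhammer (a + of_nat (Suc m) + of_nat (Suc j) + 1) (Suc m - Suc j) = pochhammer (a + 2*J + D + 4) (Suc d)" by (simp only:)
    then show ?thesis by (simp add: pochhammer_Suc Y_def D_def algebra_simps)
  qed
  have t2: "(a+2* of_nat m+1) * pochhammer (a + of_nat m + of_nat (Suc j) + 1) (m - Suc j) = (a + 2*J + D + 3) * Y"
  proof -
    have "m - Suc j = d" using m by simp
    moreover have "a + of_nat m + of_nat (Suc j) + 1 = a + 2*J + D + 3" by (simp add: mm J_def algebra_simps)
    moreover have "pochhammer (a + 2*J + D + 3) d * (a + 2*J + D + 3 + D) = (a + 2*J + D + 3) * Y"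
      using pochhammer_Suc[of "a + 2*J + D + 3" d] pochhammer_rec[of "a + 2*J + D + 3" d]
      by (simp add: Y_def D_def algebra_simps)
    ultimately have "pochhammer (a + of_nat m + of_nat (Suc j) + 1) (m - Suc j) = pochhammer (a + 2*J + D + 3) d" by (simp only:)
    moreover have "a+2* of_nat m+1 = a + 2*J + D + 3 + D" by (simp add: mm algebra_simps)
    ultimately show ?thesis by (metis (no_types, lifting) \<open>pochhammer (a + 2*J + D + 3) d * (a + 2*J + D + 3 + D) = (a + 2*J + D + 3) * Y\<close> mult.commute)
  qed
  have t3: "pochhammer (a + of_nat m + of_nat (Suc j) + 2) (Suc m - Suc j) = Y * (a + 2*J + 2*D + 4)"
  proof -
    have "Suc m - Suc j = Suc d" using m by simp
    moreover have "a + of_nat m + of_nat (Suc j) + 2 = a + 2*J + D + 4" by (simp add: mm J_def algebra_simps)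
    ultimately have "pochhammer (a + of_nat m + of_nat (Suc j) + 2) (Suc m - Suc j) = pochhammer (a + 2*J + D + 4) (Suc d)" by (simp only:)
    then show ?thesis by (simp add: pochhammer_Suc Y_def D_def algebra_simps)
  qed
  have t4: "pochhammer (a + of_nat m + of_nat j + 2) (Suc m - j) = (a + 2*J + D + 3) * Y * (a + 2*J + 2*D + 4)"
  proof -
    have "Suc m - j = Suc (Suc d)" using m by simp
    moreover have "a + of_nat m + of_nat j + 2 = a + 2*J + D + 3" by (simp add: mm J_def algebra_simps)
    ultimately have "pochhammer (a + of_nat m + of_nat j + 2) (Suc m - j) = pochhammer (a + 2*J + D + 3) (Suc (Suc d))" by (simp only:)
    also have "\<dots> = (a + 2*J + D + 3) * pochhammer (a + 2*J + D + 4) (Suc d)"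
      by (subst pochhammer_rec) (simp add: algebra_simps)
    finally show ?thesis by (simp add: pochhammer_Suc Y_def D_def algebra_simps)
  qed
  have u1: "uu a b c (Suc m) (Suc j) = - (J+D+2)*P*(B*(b+J))*(A*(a+J))*(C*(c+J))*(a+2*J+2)*(Y*(a + 2*J + 2*D + 4))
        / (Fj*(J+1)*(DB*(a-b+1+J))*(DC*(a-c+1+J)))"
    unfolding uu_def unfolding e1 t1 unfolding pochhammer_Suc fact_Suc
    unfolding of_nat_Suc A_def[symmetric] B_def[symmetric] C_def[symmetric] DB_def[symmetric] DC_def[symmetric] Fj_def[symmetric] J_def[symmetric]
    by ((simp only: times_divide_eq_right)?, intro arg_cong2[where f="(/)"]; algebra)
  have u0: "(a + 2* of_nat m + 1) * uu a b c m (Suc j) = - (D+1)*P*(B*(b+J))*(A*(a+J))*(C*(c+J))*(a+2*J+2)*((a + 2*J + D + 3) * Y)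
        / (Fj*(J+1)*(DB*(a-b+1+J))*(DC*(a-c+1+J)))"
  proof -
    have "(a + 2* of_nat m + 1) * uu a b c m (Suc j) = - (D+1)*P*(B*(b+J))*(A*(a+J))*(C*(c+J))*(a+2*J+2)
       *((a + 2* of_nat m + 1) * pochhammer (a + of_nat m + of_nat (Suc j) + 1) (m - Suc j))
        / (Fj*(J+1)*(DB*(a-b+1+J))*(DC*(a-c+1+J)))"
      unfolding uu_def unfolding e2 unfolding pochhammer_Suc[of b] pochhammer_Suc[of a] pochhammer_Suc[of c]
         pochhammer_Suc[of "a-b+1"] pochhammer_Suc[of "a-c+1"] fact_Suc
      unfolding of_nat_Suc A_def[symmetric] B_def[symmetric] C_def[symmetric] DB_def[symmetric] DC_def[symmetric] Fj_def[symmetric] J_def[symmetric]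
    by ((simp only: times_divide_eq_right)?, intro arg_cong2[where f="(/)"]; algebra)
    then show ?thesis by (simp only: t2)
  qed
  have v2: "vv a b c m (Suc (Suc j)) = - (D+1)*P*(B*(b+J)*(b+J+1))*(A*(a+J)*(a+J+1))*(C*(c+J)*(c+J+1))*(Y*(a + 2*J + 2*D + 4))
        / (Fj*(J+1)*(DB*(a-b+1+J))*(DC*(a-c+1+J)))"
    unfolding vv_def nat.case unfolding e2 t3 unfolding pochhammer_Suc fact_Suc
    unfolding of_nat_Suc A_def[symmetric] B_def[symmetric] C_def[symmetric] DB_def[symmetric] DC_def[symmetric] Fj_def[symmetric] J_def[symmetric]
    by ((simp only: times_divide_eq_right)?, intro arg_cong2[where f="(/)"]; algebra)
  have v1: "vv a b c m (Suc j) = P*(B*(b+J))*(A*(a+J))*(C*(c+J))*((a + 2*J + D + 3) * Y * (a + 2*J + 2*D + 4))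
        / (Fj*DB*DC)"
    unfolding vv_def nat.case unfolding t4 unfolding pochhammer_Suc
    unfolding of_nat_Suc A_def[symmetric] B_def[symmetric] C_def[symmetric] P_def[symmetric] DB_def[symmetric] DC_def[symmetric] Fj_def[symmetric] J_def[symmetric]
    by (rule refl)
  have q2: "qq a b c m (Suc (Suc j)) = - (D+1)*P*(B*(b+J))*(A*(a+J)*(a+J+1))*(C*(c+J)*(c+J+1))*(Y*(a + 2*J + 2*D + 4))
        / (Fj*(J+1)*(DB*(a-b+1+J))*(DC*(a-c+1+J)))"
    unfolding qq_def nat.case unfolding e2 t3 unfolding pochhammer_Suc fact_Suc
    unfolding of_nat_Suc A_def[symmetric] B_def[symmetric] C_def[symmetric] DB_def[symmetric] DC_def[symmetric] Fj_def[symmetric] J_def[symmetric]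
    by ((simp only: times_divide_eq_right)?, intro arg_cong2[where f="(/)"]; algebra)
  have ab: "a - b + of_nat (Suc j) = a-b+1+J" by (simp add: J_def algebra_simps)
  define Q where "Q = Fj*(J+1)*(DB*(a-b+1+J))*(DC*(a-c+1+J))"
  have Q0: "Q \<noteq> 0" unfolding Q_def using nb' nc' F0 by simp
  define W where "W = (J+1)*(a-c+1+J)"
  have W0: "W \<noteq> 0" unfolding W_def using nc' F0 by simp
  have QW: "Q = ((Fj*DB*DC) * (a-b+1+J)) * W" unfolding Q_def W_def by (simp only: mult_ac)
  have r: "P*(B*(b+J))*(A*(a+J))*(C*(c+J))*((a + 2*J + D + 3) * Y * (a + 2*J + 2*D + 4)) / (Fj*DB*DC) / (a-b+1+J)
       = P*(B*(b+J))*(A*(a+J))*(C*(c+J))*((a + 2*J + D + 3) * Y * (a + 2*J + 2*D + 4)) * W / Q"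
    unfolding QW using W0 by simp
  have e: "N0/Q = - (N1/Q) - x*(N2/Q) + y*(N3/Q) \<longleftrightarrow> N0 + N1 + x*N2 - y*N3 = 0" for x y N0 N1 N2 N3
  proof -
    have 1: "- (N1/Q) - x*(N2/Q) + y*(N3/Q) = (- N1 - x*N2 + y*N3)/Q" by (simp add: diff_divide_distrib add_divide_distrib)
    have 3: "(N0/Q = (- N1 - x*N2 + y*N3)/Q) \<longleftrightarrow> N0 = - N1 - x*N2 + y*N3" using Q0 by (simp add: frac_eq_eq)
    show ?thesis unfolding 1 3 by (simp add: algebra_simps)
  qed
  show ?thesis unfolding v1 q2 u1 u0 ab unfolding r unfolding mm Q_def[symmetric] e W_def by algebra
qed



lemma I2_zero:
  fixes a b c :: complex
  shows "vv a b c m 0 / (a - b + of_nat 0) = - qq a b c m (Suc 0)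
       - (1+a-c+ of_nat m) * uu a b c (Suc m) 0
       + (a+2* of_nat m+2) * ((a+2* of_nat m+1) * uu a b c m 0)"
proof -
  define M :: complex where "M = of_nat m"
  define Y where "Y = pochhammer (a + M + 2) m"
  have p1: "pochhammer (a + of_nat (Suc m) + of_nat 0 + 1) (Suc m - 0) = Y * (a + 2*M + 2)"
  proof -
    have "pochhammer (a + of_nat (Suc m) + of_nat 0 + 1) (Suc m - 0) = pochhammer (a + M + 2) (Suc m)"
      by (rule arg_cong2[where f=pochhammer]) (simp_all add: M_def algebra_simps)
    then show ?thesis unfolding pochhammer_Suc Y_def by (simp add: M_def algebra_simps)
  qed
  have p2: "(a+2* of_nat m+1) * pochhammer (a + of_nat m + of_nat 0 + 1) (m - 0) = (a + M + 1) * Y"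
  proof -
    have "pochhammer (a + of_nat m + of_nat 0 + 1) (m - 0) = pochhammer (a + M + 1) m"
      by (rule arg_cong2[where f=pochhammer]) (simp_all add: M_def algebra_simps)
    moreover have "pochhammer (a + M + 1) m * (a + M + 1 + M) = (a + M + 1) * Y"
      using pochhammer_Suc[of "a + M + 1" m] pochhammer_rec[of "a + M + 1" m]
      by (simp add: Y_def M_def algebra_simps)
    ultimately show ?thesis by (simp add: M_def algebra_simps)
  qed
  have p3: "pochhammer (a + of_nat m + of_nat 0 + 2) (Suc m - 0) = Y * (a + 2*M + 2)"
  proof -
    have "pochhammer (a + of_nat m + of_nat 0 + 2) (Suc m - 0) = pochhammer (a + M + 2) (Suc m)"
      by (rule arg_cong2[where f=pochhammer]) (simp_all add: M_def algebra_simps)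
    then show ?thesis unfolding pochhammer_Suc Y_def by (simp add: M_def algebra_simps)
  qed
  have u1: "uu a b c (Suc m) 0 = a * (Y * (a + 2*M + 2))"
    unfolding uu_def unfolding p1 by simp
  have u0: "(a+2* of_nat m+1) * uu a b c m 0 = a * ((a + M + 1) * Y)"
  proof -
    have "(a+2* of_nat m+1) * uu a b c m 0 = a * ((a+2* of_nat m+1) * pochhammer (a + of_nat m + of_nat 0 + 1) (m - 0))"
      unfolding uu_def by simp
    then show ?thesis unfolding p2 .
  qed
  have q1: "qq a b c m (Suc 0) = a * c * (Y * (a + 2*M + 2))"
    unfolding qq_def nat.case unfolding p3 by simp
  have "0 = - (a * c * (Y * (a + 2*M + 2))) - (1+a-c+ M) * (a * (Y * (a + 2*M + 2)))
       + (a+2*M+2) * (a * ((a + M + 1) * Y))" by algebra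
  then show ?thesis unfolding u1 u0 q1 by (simp add: vv_def M_def)
qed

lemma I2_top:
  fixes a b c :: complex
  assumes nb: "pochhammer (a-b+1) (Suc m) \<noteq> 0" and nc: "pochhammer (a-c+1) (Suc m) \<noteq> 0"
  shows "vv a b c m (Suc m) / (a - b + of_nat (Suc m)) = - qq a b c m (Suc (Suc m))
       - (1+a-c+ of_nat m) * uu a b c (Suc m) (Suc m)
       + (a+2* of_nat m+2) * ((a+2* of_nat m+1) * uu a b c m (Suc m))"
proof -
  define M :: complex where "M = of_nat m"
  have "pochhammer (a-b+1) m * (a-b+1+ of_nat m) \<noteq> 0" by (metis nb pochhammer_Suc)
  hence "a-b+1+ of_nat m \<noteq> 0" by simp
  moreover have "a - b + of_nat (Suc m) = a-b+1+ of_nat m" by simp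
  ultimately have z: "a - b + of_nat (Suc m) \<noteq> 0" by (simp add: add.assoc)
  have h: "(1+a-b+ of_nat m)*(1+a-c+ of_nat m) * uu a b c (Suc m) (Suc m) = - vv a b c m (Suc m)"
    using I1[of "Suc m" m a b c] nb nc by (simp add: uu_zero vv_zero)
  have eq: "1+a-b+ of_nat m = a - b + of_nat (Suc m)" by (simp add: algebra_simps)
  have "vv a b c m (Suc m) = - ((1+a-b+ of_nat m)*(1+a-c+ of_nat m) * uu a b c (Suc m) (Suc m))"
    unfolding h by simp
  then have "vv a b c m (Suc m) = - ((a - b + of_nat (Suc m)) * ((1+a-c+ of_nat m) * uu a b c (Suc m) (Suc m)))"
    by (simp only: eq mult.assoc)
  then have "vv a b c m (Suc m) / (a - b + of_nat (Suc m)) = - ((1+a-c+ of_nat m) * uu a b c (Suc m) (Suc m))"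
    using z by (metis minus_divide_left nonzero_mult_div_cancel_left)
  then show ?thesis by (simp add: uu_zero qq_zero)
qed

lemma I2:
  fixes a b c :: complex
  assumes k: "k \<le> Suc (Suc m)" and nb: "k \<le> Suc m \<Longrightarrow> pochhammer (a-b+1) k \<noteq> 0"
    and nc: "k \<le> Suc m \<Longrightarrow> pochhammer (a-c+1) k \<noteq> 0"
  shows "vv a b c m k / (a - b + of_nat k) = - qq a b c m (Suc k)
       - (1+a-c+ of_nat m) * uu a b c (Suc m) k
       + (a+2* of_nat m+2) * ((a+2* of_nat m+1) * uu a b c m k)"
proof (cases "k = Suc (Suc m)")
  case True then show ?thesis by (simp add: uu_zero vv_zero qq_zero)
next
  case F1: False
  show ?thesis
  proof (cases k)
    case 0 then show ?thesis using I2_zero by simp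
  next
    case (Suc j)
    show ?thesis
    proof (cases "k = Suc m")
      case True then show ?thesis using I2_top nb nc k by simp
    next
      case False
      then obtain d where "m = Suc (j + d)" using k Suc F1 by (metis add_Suc_right le_SucE less_imp_Suc_add not_less_eq_eq Suc_le_eq le_add1 le_imp_less_Suc)
      then show ?thesis using I2_mid[of m j d a b c] nb nc Suc k F1 by simp
    qed
  qed
qed



lemma H_step: "H (2 * Suc k) x = H (2 * k) x + 1 / (x + of_nat (2*k+1)) + 1 / (x + of_nat (2*k+2))"
proof -
  have "2 * Suc k = Suc (Suc (2*k))" by simp
  then show ?thesis unfolding H_def by (simp add: sum.cl_ivl_Suc)
qed

lemma h_diff:
  fixes x a b :: complex
  assumes ha: "a = x + 1/2" and hb: "b = x/2 + 1"
  shows "H (2 * Suc k) x - H (2 * k) x = (1/(a - b + of_nat (Suc k)) + 1/(b + of_nat k)) / 2"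
proof -
  have 1: "a - b + of_nat (Suc k) = (x + of_nat (2*k+1)) / 2" unfolding ha hb by (simp add: field_simps)
  have 2: "b + of_nat k = (x + of_nat (2*k+2)) / 2" unfolding hb by (simp add: field_simps)
  show ?thesis unfolding H_step 1 2 by (simp add: field_simps)
qed

lemma S1_step:
  fixes a b c :: complex
  assumes nb: "\<And>k. k \<le> Suc m \<Longrightarrow> pochhammer (a-b+1) k \<noteq> 0"
    and nc: "\<And>k. k \<le> Suc m \<Longrightarrow> pochhammer (a-c+1) k \<noteq> 0"
  shows "(1+a-b+ of_nat m)*(1+a-c+ of_nat m) * (\<Sum>k<Suc (Suc m). uu a b c (Suc m) k)
       - (1+a-b-c+ of_nat m)*(a+2* of_nat m+1)*(a+2* of_nat m+2) * (\<Sum>k<Suc m. uu a b c m k) = 0"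
proof -
  have z: "(\<Sum>k<Suc m. uu a b c m k) = (\<Sum>k<Suc (Suc m). uu a b c m k)" by (simp add: uu_zero)
  have "(1+a-b+ of_nat m)*(1+a-c+ of_nat m) * (\<Sum>k<Suc (Suc m). uu a b c (Suc m) k)
       - (1+a-b-c+ of_nat m)*(a+2* of_nat m+1)*(a+2* of_nat m+2) * (\<Sum>k<Suc (Suc m). uu a b c m k)
     = (\<Sum>k<Suc (Suc m). (1+a-b+ of_nat m)*(1+a-c+ of_nat m) * uu a b c (Suc m) k
       - (1+a-b-c+ of_nat m)*(a+2* of_nat m+1)*(a+2* of_nat m+2) * uu a b c m k)"
    unfolding sum_subtractf sum_distrib_left ..
  also have "\<dots> = (\<Sum>k<Suc (Suc m). vv a b c m (Suc k) - vv a b c m k)"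
    by (rule sum.cong) (auto intro!: I1 nb nc)
  also have "\<dots> = 0" by (simp add: sum_lessThan_telescope vv_zero) (simp add: vv_def)
  finally show ?thesis unfolding z .
qed

lemma Sh_step:
  fixes a b c x :: complex
  assumes ha: "a = x + 1/2" and hb: "b = x/2 + 1"
  assumes nb: "\<And>k. k \<le> Suc m \<Longrightarrow> pochhammer (a-b+1) k \<noteq> 0"
    and nc: "\<And>k. k \<le> Suc m \<Longrightarrow> pochhammer (a-c+1) k \<noteq> 0"
    and nbk: "\<And>k. k \<le> m \<Longrightarrow> b + of_nat k \<noteq> 0"
  shows "(1+a-b+ of_nat m)*(1+a-c+ of_nat m) * (\<Sum>k<Suc (Suc m). uu a b c (Suc m) k * H (2*k) x)
       - (1+a-b-c+ of_nat m)*(a+2* of_nat m+1)*(a+2* of_nat m+2) * (\<Sum>k<Suc m. uu a b c m k * H (2*k) x)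
       = ((1+a-c+ of_nat m) * (\<Sum>k<Suc (Suc m). uu a b c (Suc m) k)
          - (a+2* of_nat m+2) * (a+2* of_nat m+1) * (\<Sum>k<Suc m. uu a b c m k)) / 2"
proof -
  define al where "al = (1+a-b+ of_nat m)*(1+a-c+ of_nat m)"
  define ga where "ga = (1+a-b-c+ of_nat m)*(a+2* of_nat m+1)*(a+2* of_nat m+2)"
  define ga' where "ga' = (a+2* of_nat m+2) * (a+2* of_nat m+1)"
  define cm where "cm = 1+a-c+ of_nat m"
  define h where "h = (\<lambda>k. H (2*k) x)"
  define f where "f = (\<lambda>k. vv a b c m k * h k + qq a b c m (Suc k) / 2)"
  define g where "g = (\<lambda>k. (cm * uu a b c (Suc m) k - ga' * uu a b c m k) / 2)"
  have I2': "vv a b c m k / (a - b + of_nat k) = - qq a b c m (Suc k) - cm * uu a b c (Suc m) k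
       + ga' * uu a b c m k" if "k \<le> Suc (Suc m)" for k
    using I2[of k m a b c] that nb nc unfolding cm_def ga'_def by (simp add: mult.assoc)
  have step: "(al * uu a b c (Suc m) k - ga * uu a b c m k) * h k = f (Suc k) - f k + g (Suc k)"
    if k: "k < Suc (Suc m)" for k
  proof -
    have e1: "al * uu a b c (Suc m) k - ga * uu a b c m k = vv a b c m (Suc k) - vv a b c m k"
      unfolding al_def ga_def using I1[of k m a b c] k nb nc by simp
    have key: "vv a b c m (Suc k) * (h (Suc k) - h k) = (qq a b c m (Suc k) - qq a b c m (Suc (Suc k))) / 2 - g (Suc k)"
    proof (cases "k = Suc m")
      case True
      then show ?thesis by (simp add: vv_zero qq_zero uu_zero g_def)
    next
      case False
      then have km: "k \<le> m" using k by simp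
      have bk: "b + of_nat k \<noteq> 0" using nbk km .
      have hd: "h (Suc k) - h k = (1/(a - b + of_nat (Suc k)) + 1/(b + of_nat k)) / 2"
        unfolding h_def using h_diff[OF ha hb] .
      have q: "vv a b c m (Suc k) / (b + of_nat k) = qq a b c m (Suc k)"
        unfolding vv_qq using bk by simp
      have i2: "vv a b c m (Suc k) / (a - b + of_nat (Suc k)) = - qq a b c m (Suc (Suc k)) - cm * uu a b c (Suc m) (Suc k)
         + ga' * uu a b c m (Suc k)" by (rule I2') (use k in simp)
      have "vv a b c m (Suc k) * (h (Suc k) - h k)
          = (vv a b c m (Suc k) / (a - b + of_nat (Suc k)) + vv a b c m (Suc k) / (b + of_nat k)) / 2"
        unfolding hd by (simp add: field_simps)
      also have "\<dots> = (qq a b c m (Suc k) - qq a b c m (Suc (Suc k))) / 2 - g (Suc k)"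
        unfolding i2 q g_def by (simp add: field_simps)
      finally show ?thesis .
    qed
    have "(vv a b c m (Suc k) - vv a b c m k) * h k
        = vv a b c m (Suc k) * h (Suc k) - vv a b c m k * h k - vv a b c m (Suc k) * (h (Suc k) - h k)"
      by (simp add: algebra_simps)
    also have "\<dots> = f (Suc k) - f k + g (Suc k)" unfolding key f_def by (simp add: field_simps)
    finally show ?thesis unfolding e1 .
  qed
  have z: "(\<Sum>k<Suc m. uu a b c m k * h k) = (\<Sum>k<Suc (Suc m). uu a b c m k * h k)" by (simp add: uu_zero)
  have z2: "(\<Sum>k<Suc m. uu a b c m k) = (\<Sum>k<Suc (Suc (Suc m)). uu a b c m k)" by (simp add: uu_zero)
  have z3: "(\<Sum>k<Suc (Suc m). uu a b c (Suc m) k) = (\<Sum>k<Suc (Suc (Suc m)). uu a b c (Suc m) k)" by (simp add: uu_zero)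
  have "al * (\<Sum>k<Suc (Suc m). uu a b c (Suc m) k * h k) - ga * (\<Sum>k<Suc (Suc m). uu a b c m k * h k)
      = (\<Sum>k<Suc (Suc m). (al * uu a b c (Suc m) k - ga * uu a b c m k) * h k)"
    by (simp add: sum_distrib_left sum_subtractf algebra_simps)
  also have "\<dots> = (\<Sum>k<Suc (Suc m). (f (Suc k) - f k) + g (Suc k))"
    by (rule sum.cong) (simp_all add: step)
  also have "\<dots> = f (Suc (Suc m)) - f 0 + (\<Sum>k<Suc (Suc m). g (Suc k))"
    by (simp add: sum.distrib sum_lessThan_telescope)
  also have "\<dots> = (\<Sum>k<Suc (Suc (Suc m)). g k)"
  proof -
    have f2: "f (Suc (Suc m)) = 0" unfolding f_def by (simp add: vv_zero qq_zero)
    have f0: "f 0 = - g 0"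
    proof -
      have "vv a b c m 0 / (a - b + of_nat 0) = - qq a b c m (Suc 0) - cm * uu a b c (Suc m) 0 + ga' * uu a b c m 0"
        using I2'[of 0] by simp
      then have "qq a b c m (Suc 0) = - cm * uu a b c (Suc m) 0 + ga' * uu a b c m 0" by (simp add: vv_def algebra_simps eq_neg_iff_add_eq_0 add_eq_0_iff2)
      note qe = this
      have "f 0 = qq a b c m (Suc 0) / 2" unfolding f_def by (simp add: vv_def)
      also have "\<dots> = (- cm * uu a b c (Suc m) 0 + ga' * uu a b c m 0) / 2" unfolding qe ..
      also have "(- cm * uu a b c (Suc m) 0 + ga' * uu a b c m 0) / 2 = - ((cm * uu a b c (Suc m) 0 - ga' * uu a b c m 0) / 2)"
        by (simp add: field_simps)
      finally show ?thesis unfolding g_def .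
    qed
    have "(\<Sum>k<Suc (Suc (Suc m)). g k) = g 0 + (\<Sum>k<Suc (Suc m). g (Suc k))"
      by (subst sum.lessThan_Suc_shift) simp
    then show ?thesis using f2 f0 by simp
  qed
  also have "\<dots> = (cm * (\<Sum>k<Suc (Suc (Suc m)). uu a b c (Suc m) k) - ga' * (\<Sum>k<Suc (Suc (Suc m)). uu a b c m k)) / 2"
    unfolding g_def by (simp only: sum_divide_distrib[symmetric] sum_subtractf sum_distrib_left)
  finally have F: "al * (\<Sum>k<Suc (Suc m). uu a b c (Suc m) k * h k) - ga * (\<Sum>k<Suc (Suc m). uu a b c m k * h k) =
    (cm * (\<Sum>k<Suc (Suc (Suc m)). uu a b c (Suc m) k) - ga' * (\<Sum>k<Suc (Suc (Suc m)). uu a b c m k)) / 2" .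
  show ?thesis using F unfolding z[symmetric] z2[symmetric] z3[symmetric] unfolding al_def ga_def cm_def ga'_def h_def by assumption
qed



lemma alg_step:
  fixes u v w g S S' X Xs D :: complex
  assumes u: "u \<noteq> 0" and v: "v \<noteq> 0" and w: "w \<noteq> 0"
    and r: "(u * v) * Xs = (w * g) * X"
    and s: "(u * v) * S' - (w * g) * S = (v * Xs - g * X) / 2"
    and d: "S = X * D"
  shows "S' = Xs * (D + (1/u - 1/w) / 2)"
proof -
  have Xs: "Xs = w * g * X / (u * v)" using r u v by (simp add: field_simps)
  have "S' = ((w * g) * S + (v * Xs - g * X) / 2) / (u * v)" using s u v by (simp add: field_simps)
  also have "\<dots> = Xs * (D + (1/u - 1/w) / 2)" unfolding Xs d using u v w by (simp add: field_simps)
  finally show ?thesis .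
qed

definition PiN :: "complex \<Rightarrow> complex \<Rightarrow> complex \<Rightarrow> nat \<Rightarrow> complex" where
  "PiN a b c m = pochhammer a (2*m+1) * pochhammer (a-b-c+1) m / (pochhammer (a-b+1) m * pochhammer (a-c+1) m)"

definition Dm :: "complex \<Rightarrow> complex \<Rightarrow> complex \<Rightarrow> nat \<Rightarrow> complex" where
  "Dm a b c m = ((\<Sum>j<m. 1/(a-b+1+ of_nat j)) - (\<Sum>j<m. 1/(a-b-c+1+ of_nat j))) / 2"

lemma main_ind:
  fixes a b c x :: complex
  assumes ha: "a = x + 1/2" and hb: "b = x/2 + 1"
    and nb: "\<And>k. k \<le> n \<Longrightarrow> pochhammer (a-b+1) k \<noteq> 0"
    and nc: "\<And>k. k \<le> n \<Longrightarrow> pochhammer (a-c+1) k \<noteq> 0"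
    and nbk: "\<And>k. k < n \<Longrightarrow> b + of_nat k \<noteq> 0"
    and np: "\<And>j. j < n \<Longrightarrow> a-b-c+1+ of_nat j \<noteq> 0"
  shows "m \<le> n \<Longrightarrow> (\<Sum>k<Suc m. uu a b c m k) = PiN a b c m
             \<and> (\<Sum>k<Suc m. uu a b c m k * H (2*k) x) = PiN a b c m * Dm a b c m"
proof (induction m)
  case 0
  show ?case by (simp add: uu_def PiN_def Dm_def H_def)
next
  case (Suc m)
  then have IH: "(\<Sum>k<Suc m. uu a b c m k) = PiN a b c m"
     "(\<Sum>k<Suc m. uu a b c m k * H (2*k) x) = PiN a b c m * Dm a b c m" by auto
  have mn: "Suc m \<le> n" by fact
  define M :: complex where "M = of_nat m"
  have nb1: "pochhammer (a-b+1) m \<noteq> 0" "a-b+1+M \<noteq> 0"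
    using nb[of "Suc m"] mn unfolding M_def pochhammer_Suc by auto
  have nc1: "pochhammer (a-c+1) m \<noteq> 0" "a-c+1+M \<noteq> 0"
    using nc[of "Suc m"] mn unfolding M_def pochhammer_Suc by auto
  have np1: "a-b-c+1+M \<noteq> 0" using np[of m] mn unfolding M_def by simp
  have PiS: "((1+a-b+M) * (1+a-c+M)) * PiN a b c (Suc m) = ((1+a-b-c+M) * ((a+2*M+2) * (a+2*M+1))) * PiN a b c m"
  proof -
    have pa: "pochhammer a (2 * Suc m + 1) = pochhammer a (2*m+1) * (a+2*M+1) * (a+2*M+2)"
    proof -
      have "2 * Suc m + 1 = Suc (Suc (2*m+1))" by simp
      then show ?thesis unfolding M_def by (simp only: pochhammer_Suc) (simp add: algebra_simps)
    qed
    define A where "A = pochhammer a (2*m+1)"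
    define P where "P = pochhammer (a-b-c+1) m"
    define AB where "AB = pochhammer (a-b+1) m"
    define AC where "AC = pochhammer (a-c+1) m"
    have e1: "PiN a b c (Suc m) = (A*P*((a+2*M+2)*(a+2*M+1))*(1+a-b-c+M)) / ((AB*(1+a-b+M))*(AC*(1+a-c+M)))"
      unfolding PiN_def pa unfolding pochhammer_Suc M_def[symmetric] A_def[symmetric] P_def[symmetric] AB_def[symmetric] AC_def[symmetric]
      by (intro arg_cong2[where f="(/)"]; algebra)
    have e0: "PiN a b c m = A*P/(AB*AC)" unfolding PiN_def A_def P_def AB_def AC_def ..
    have ab: "AB \<noteq> 0" "AC \<noteq> 0" using nb1 nc1 unfolding AB_def AC_def by auto
    have uv: "1+a-b+M \<noteq> 0" "1+a-c+M \<noteq> 0" using nb1 nc1 by (simp_all add: algebra_simps)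
    have gen: "\<And>u v N w. u \<noteq> 0 \<Longrightarrow> v \<noteq> 0 \<Longrightarrow> (u * v) * (N*w/((AB*u)*(AC * v))) = w * (N/(AB*AC))"
      using ab by (simp add: field_simps)
    show ?thesis unfolding e1 e0 using gen[OF uv, of "A*P*((a+2*M+2)*(a+2*M+1))" "1+a-b-c+M"]
      by (simp add: mult_ac)
  qed
  have uu0: "1+a-b+M \<noteq> 0" using nb1 by (simp add: algebra_simps)
  have vv0: "1+a-c+M \<noteq> 0" using nc1 by (simp add: algebra_simps)
  have S1: "(\<Sum>k<Suc (Suc m). uu a b c (Suc m) k) = PiN a b c (Suc m)"
  proof -
    have "(1+a-b+M)*(1+a-c+M) * (\<Sum>k<Suc (Suc m). uu a b c (Suc m) k)
       - (1+a-b-c+M)*(a+2*M+1)*(a+2*M+2) * (\<Sum>k<Suc m. uu a b c m k) = 0"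
      unfolding M_def by (rule S1_step) (meson nb mn le_trans, meson nc mn le_trans)
    then have "(1+a-b+M)*(1+a-c+M) * (\<Sum>k<Suc (Suc m). uu a b c (Suc m) k)
       = (1+a-b-c+M)*(a+2*M+1)*(a+2*M+2) * PiN a b c m"
      unfolding IH(1) by (simp only: right_minus_eq)
    also have "\<dots> = ((1+a-b-c+M) * ((a+2*M+2) * (a+2*M+1))) * PiN a b c m" by (simp only: mult_ac)
    also have "\<dots> = ((1+a-b+M) * (1+a-c+M)) * PiN a b c (Suc m)" by (rule PiS[symmetric])
    finally have "((1+a-b+M) * (1+a-c+M)) * (\<Sum>k<Suc (Suc m). uu a b c (Suc m) k)
        = ((1+a-b+M) * (1+a-c+M)) * PiN a b c (Suc m)" by (simp only: mult.assoc)
    moreover have "(1+a-b+M) * (1+a-c+M) \<noteq> 0" using uu0 vv0 by simp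
    ultimately show ?thesis by simp
  qed
  have Sh: "(\<Sum>k<Suc (Suc m). uu a b c (Suc m) k * H (2*k) x) = PiN a b c (Suc m) * Dm a b c (Suc m)"
  proof -
    have st: "(1+a-b+M)*(1+a-c+M) * (\<Sum>k<Suc (Suc m). uu a b c (Suc m) k * H (2*k) x)
       - (1+a-b-c+M)*(a+2*M+1)*(a+2*M+2) * (\<Sum>k<Suc m. uu a b c m k * H (2*k) x)
       = ((1+a-c+M) * (\<Sum>k<Suc (Suc m). uu a b c (Suc m) k)
          - (a+2*M+2) * (a+2*M+1) * (\<Sum>k<Suc m. uu a b c m k)) / 2"
      unfolding M_def by (rule Sh_step[OF ha hb]) (meson nb mn le_trans, meson nc mn le_trans, rule nbk, use mn in linarith)
    have st': "((1+a-b+M) * (1+a-c+M)) * (\<Sum>k<Suc (Suc m). uu a b c (Suc m) k * H (2*k) x)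
       - ((1+a-b-c+M) * ((a+2*M+2) * (a+2*M+1))) * (PiN a b c m * Dm a b c m)
       = ((1+a-c+M) * PiN a b c (Suc m) - ((a+2*M+2) * (a+2*M+1)) * PiN a b c m) / 2"
      using st unfolding S1 IH by (simp only: mult_ac)
    have D: "Dm a b c (Suc m) = Dm a b c m + (1/(1+a-b+M) - 1/(1+a-b-c+M)) / 2"
    proof -
      have g: "\<And>A p B q :: complex. ((A + p) - (B + q))/2 = (A - B)/2 + (p - q)/2" by (simp add: field_simps)
      have h: "a-b+1+M = 1+a-b+M" "a-b-c+1+M = 1+a-b-c+M" by simp_all
      show ?thesis unfolding Dm_def sum.lessThan_Suc M_def[symmetric] h g ..
    qed
    have u: "1+a-b+M \<noteq> 0" using nb1 by (simp add: algebra_simps)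
    have v: "1+a-c+M \<noteq> 0" using nc1 by (simp add: algebra_simps)
    have w: "1+a-b-c+M \<noteq> 0" using np1 by (simp add: algebra_simps)
    show ?thesis unfolding D
      by (rule alg_step[OF u v w PiS st']) simp
  qed
  show ?case using S1 Sh by simp
qed



lemma neg_binom: "(-1::complex) ^ k * of_nat (n choose k) = pochhammer (- of_nat n) k / fact k"
proof -
  have "of_nat (n choose k) = ((of_nat n :: complex) gchoose k)" by (rule binomial_gbinomial)
  also have "\<dots> = (-1) ^ k * pochhammer (- of_nat n) k / fact k" by (rule gbinomial_pochhammer)
  finally have "(-1::complex) ^ k * of_nat (n choose k) = ((-1) ^ k * (-1) ^ k) * pochhammer (- of_nat n) k / fact k"
    by (simp add: mult.assoc)
  also have "(-1::complex) ^ k * (-1) ^ k = 1" by (simp flip: power_add add: power_mult[symmetric] mult_2)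
  finally show ?thesis by simp
qed

lemma gch: "(z + of_nat k) gchoose k = pochhammer (z + 1) k / fact k"
  by (simp add: gbinomial_pochhammer')

lemma H_shift: "H n z = (\<Sum>j<n. 1 / (z + 1 + of_nat j))"
  unfolding H_def by (simp add: sum.atLeast1_atMost_eq add_ac)

theorem theorem6:
  fixes n :: nat and x y :: complex
  assumes d1: "\<forall>k\<le>n. ((x - 1) / 2 + of_nat k) gchoose k \<noteq> 0"
      and d2: "\<forall>k\<le>n. (x - 1/2 + of_nat n + of_nat k) gchoose k \<noteq> 0"
      and d3: "\<forall>k\<le>n. (x - y - 1/2 + of_nat k) gchoose k \<noteq> 0"
      and d4: "\<forall>k\<le>n. 1 + 2 * x + 2 * of_nat n + 2 * of_nat k \<noteq> 0"
      and d5: "\<forall>j\<in>{1..2*n}. x + of_nat j \<noteq> 0"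
      and d6: "\<forall>j\<in>{1..n}. (x - 1) / 2 + of_nat j \<noteq> 0"
      and d7: "\<forall>j\<in>{1..n}. (x - 3) / 2 - y + of_nat j \<noteq> 0"
  shows "(\<Sum>k=0..n. (-1) ^ k * of_nat (n choose k)
            * ( ((x / 2 + of_nat k) gchoose k) * ((x - 1/2 + of_nat k) gchoose k) * ((y + of_nat k) gchoose k)
              / ( (((x - 1) / 2 + of_nat k) gchoose k) * ((x - 1/2 + of_nat n + of_nat k) gchoose k)
                  * ((x - y - 1/2 + of_nat k) gchoose k) ) )
            * ((1 + 2 * x + 4 * of_nat k) / (1 + 2 * x + 2 * of_nat n + 2 * of_nat k))
            * H (2 * k) x)
       = 1/2 * ( ((x - 1/2 + of_nat n) gchoose n) * (((x - 3) / 2 - y + of_nat n) gchoose n)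
               / ( (((x - 1) / 2 + of_nat n) gchoose n) * ((x - y - 1/2 + of_nat n) gchoose n) ) )
             * (H n ((x - 1) / 2) - H n ((x - 3) / 2 - y))"
proof -
  define a where "a = x + 1/2"
  define b where "b = x/2 + 1"
  define c where "c = y + 1"
  have ab1: "a - b + 1 = (x - 1)/2 + 1" unfolding a_def b_def by (simp add: field_simps)
  have ac1: "a - c + 1 = x - y - 1/2 + 1" unfolding a_def c_def by (simp add: field_simps)
  have abc1: "a - b - c + 1 = (x - 3)/2 - y + 1" unfolding a_def b_def c_def by (simp add: field_simps)
  have nb: "pochhammer (a-b+1) k \<noteq> 0" if "k \<le> n" for k
    using d1 that unfolding ab1 by (auto simp: gch)
  have nc: "pochhammer (a-c+1) k \<noteq> 0" if "k \<le> n" for k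
    using d3 that unfolding ac1 by (auto simp: gch)
  have nbk: "b + of_nat k \<noteq> 0" if "k < n" for k
  proof -
    have "2*k+2 \<in> {1..2*n}" using that by simp
    then have "x + of_nat (2*k+2) \<noteq> 0" using d5 by blast
    moreover have "b + of_nat k = (x + of_nat (2*k+2)) / 2" unfolding b_def by (simp add: field_simps)
    ultimately show ?thesis by (metis divide_eq_0_iff zero_neq_numeral)
  qed
  have np: "a-b-c+1+ of_nat j \<noteq> 0" if "j < n" for j
  proof -
    have "Suc j \<in> {1..n}" using that by simp
    then have "(x - 3) / 2 - y + of_nat (Suc j) \<noteq> 0" using d7 by blast
    moreover have "a-b-c+1+ of_nat j = (x - 3) / 2 - y + of_nat (Suc j)" unfolding abc1 by simp
    ultimately show ?thesis by metis
  qed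
  have main: "(\<Sum>k<Suc n. uu a b c n k * H (2*k) x) = PiN a b c n * Dm a b c n"
    using main_ind[OF a_def b_def nb nc nbk np, of n] by simp
  define N where "N = pochhammer (a + of_nat n) (Suc n)"
  have an: "pochhammer (a + of_nat n) n \<noteq> 0"
  proof -
    have "(x - 1/2 + of_nat n + of_nat n) gchoose n \<noteq> 0" using d2 by auto
    moreover have "(x - 1/2 + of_nat n + of_nat n) gchoose n = pochhammer (x - 1/2 + of_nat n + 1) n / fact n" by (rule gch)
    moreover have "x - 1/2 + of_nat n + 1 = a + of_nat n" unfolding a_def by simp
    ultimately show ?thesis by auto
  qed
  have a2n: "a + of_nat n + of_nat n \<noteq> 0"
  proof -
    have "1 + 2 * x + 2 * of_nat n + 2 * of_nat n \<noteq> 0" using d4 by auto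
    moreover have "1 + 2 * x + 2 * of_nat n + 2 * of_nat n = 2 * (a + of_nat n + of_nat n)" unfolding a_def by (simp add: field_simps)
    ultimately show ?thesis by (metis mult_zero_right)
  qed
  have N0: "N \<noteq> 0" unfolding N_def pochhammer_Suc using an a2n by simp
  have trm: "(-1) ^ k * of_nat (n choose k)
            * ( ((x / 2 + of_nat k) gchoose k) * ((x - 1/2 + of_nat k) gchoose k) * ((y + of_nat k) gchoose k)
              / ( (((x - 1) / 2 + of_nat k) gchoose k) * ((x - 1/2 + of_nat n + of_nat k) gchoose k)
                  * ((x - y - 1/2 + of_nat k) gchoose k) ) )
            * ((1 + 2 * x + 4 * of_nat k) / (1 + 2 * x + 2 * of_nat n + 2 * of_nat k))
            * H (2 * k) x = uu a b c n k * H (2*k) x / N" if k: "k \<le> n" for k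
  proof -
    define PN where "PN = pochhammer (- of_nat n :: complex) k"
    define B where "B = pochhammer b k"
    define A where "A = pochhammer a k"
    define C where "C = pochhammer c k"
    define DB where "DB = pochhammer (a-b+1) k"
    define DC where "DC = pochhammer (a-c+1) k"
    define AN where "AN = pochhammer (a + of_nat n) k"
    define T where "T = pochhammer (a + of_nat n + of_nat k + 1) (n - k)"
    define Fk :: complex where "Fk = fact k"
    define K :: complex where "K = of_nat k"
    define h where "h = H (2*k) x"
    have NT: "N = AN * (a + of_nat n + K) * T"
    proof -
      have "N = pochhammer (a + of_nat n) (Suc k) * pochhammer (a + of_nat n + of_nat (Suc k)) (Suc n - Suc k)"
        unfolding N_def by (rule pochhammer_product) (use k in simp)
      moreover have "pochhammer (a + of_nat n + of_nat (Suc k)) (Suc n - Suc k) = T"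
        unfolding T_def by (rule arg_cong2[where f=pochhammer]) simp_all
      ultimately show ?thesis unfolding pochhammer_Suc AN_def K_def by simp
    qed
    have nz: "DB \<noteq> 0" "DC \<noteq> 0" "AN \<noteq> 0" "a + of_nat n + K \<noteq> 0" "T \<noteq> 0" "Fk \<noteq> 0"
      using nb[OF k] nc[OF k] N0 unfolding NT DB_def DC_def Fk_def by auto
    have g1: "(x / 2 + of_nat k) gchoose k = B / Fk" unfolding gch B_def Fk_def b_def by (simp add: add_ac)
    have g2: "(x - 1/2 + of_nat k) gchoose k = A / Fk" unfolding gch A_def Fk_def a_def by (simp add: add_ac)
    have g3: "(y + of_nat k) gchoose k = C / Fk" unfolding gch C_def Fk_def c_def by (simp add: add_ac)
    have g4: "((x - 1) / 2 + of_nat k) gchoose k = DB / Fk" unfolding gch DB_def Fk_def ab1 ..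
    have g5: "(x - 1/2 + of_nat n + of_nat k) gchoose k = AN / Fk" unfolding gch AN_def Fk_def a_def by (simp add: add_ac)
    have g6: "(x - y - 1/2 + of_nat k) gchoose k = DC / Fk" unfolding gch DC_def Fk_def ac1 ..
    have r: "(1 + 2 * x + 4 * of_nat k) / (1 + 2 * x + 2 * of_nat n + 2 * of_nat k) = (a + 2*K) / (a + of_nat n + K)"
    proof -
      have e1: "1 + 2 * x + 4 * of_nat k = 2 * (a + 2*K)" unfolding a_def K_def by (simp add: field_simps)
      have e2: "1 + 2 * x + 2 * of_nat n + 2 * of_nat k = 2 * (a + of_nat n + K)" unfolding a_def K_def by (simp add: field_simps)
      show ?thesis unfolding e1 e2 by (rule mult_divide_mult_cancel_left) simp
    qed
    have u: "uu a b c n k = PN * B * A * C * (a + 2*K) * T / (Fk * DB * DC)"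
      unfolding uu_def PN_def B_def A_def C_def T_def Fk_def DB_def DC_def K_def ..
    define E where "E = a + of_nat n + K"
    have E0: "E \<noteq> 0" using nz(4) unfolding E_def .
    show ?thesis unfolding neg_binom g1 g2 g3 g4 g5 g6 r u NT h_def[symmetric] PN_def[symmetric] Fk_def[symmetric] E_def[symmetric]
      using nz E0 by (simp add: field_simps)
  qed
  have lhs: "(\<Sum>k=0..n. (-1) ^ k * of_nat (n choose k)
            * ( ((x / 2 + of_nat k) gchoose k) * ((x - 1/2 + of_nat k) gchoose k) * ((y + of_nat k) gchoose k)
              / ( (((x - 1) / 2 + of_nat k) gchoose k) * ((x - 1/2 + of_nat n + of_nat k) gchoose k)
                  * ((x - y - 1/2 + of_nat k) gchoose k) ) )
            * ((1 + 2 * x + 4 * of_nat k) / (1 + 2 * x + 2 * of_nat n + 2 * of_nat k))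
            * H (2 * k) x) = (\<Sum>k<Suc n. uu a b c n k * H (2*k) x) / N"
    unfolding sum_divide_distrib atLeast0AtMost lessThan_Suc_atMost by (rule sum.cong[OF refl], rule trm) simp
  have ratio: "((x - 1/2 + of_nat n) gchoose n) * (((x - 3) / 2 - y + of_nat n) gchoose n)
               / ( (((x - 1) / 2 + of_nat n) gchoose n) * ((x - y - 1/2 + of_nat n) gchoose n) ) = PiN a b c n / N"
  proof -
    have p: "pochhammer a (2*n+1) = pochhammer a n * N"
      unfolding N_def using pochhammer_product'[of a n "Suc n"] by (simp add: mult_2)
    have f: "(fact n :: complex) \<noteq> 0" by simp
    have "x - 1/2 + 1 = a" unfolding a_def by simp
    then show ?thesis unfolding gch PiN_def p abc1[symmetric] ab1[symmetric] ac1[symmetric]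
      using N0 f by (simp add: field_simps)
  qed
  have D: "H n ((x - 1) / 2) - H n ((x - 3) / 2 - y) = 2 * Dm a b c n"
    unfolding H_shift Dm_def ab1[symmetric] abc1[symmetric] by simp
  show ?thesis unfolding lhs main ratio D by simp
qed


end
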